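(* Let $L$ be a C-loop with nucleus $N$. Then $N$ is a normal subloop (indeed a normal subgroup) of $L$.
   Context: A loop is a set with a binary operation and neutral element $e$ in which left and right division are uniquely solvable. A C-loop is a loop satisfying $x(y(yz))=((xy)y)z$ for all $x,y,z$. The left nucleus is $N_\lambda=\{a: a(yz)=(ay)z\ \forall y,z\}$, the middle nucleus $N_\mu=\{a: y(az)=(ya)z\ \forall y,z\}$, the right nucleus $N_\rho=\{a: y(za)=(yz)a\ \forall y,z\}$, and the nucleus is $N=N_\lambda\cap N_\mu\cap N_\rho$. A subloop $K$ of $L$ is normal if $xK=Kx$, $x(yK)=(xy)K$ and $x(Ky)=(xK)y$ for all $x,y\in L$. *)

theory Defs
  imports Main
begin

definition is_loop :: "'a set \<Rightarrow> ('a \<Rightarrow> 'a \<Rightarrow> 'a) \<Rightarrow> 'a \<Rightarrow> bool" where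
  "is_loop L m e \<longleftrightarrow>
     e \<in> L \<and> (\<forall>x\<in>L. \<forall>y\<in>L. m x y \<in> L) \<and>
     (\<forall>x\<in>L. m e x = x \<and> m x e = x) \<and>
     (\<forall>a\<in>L. \<forall>b\<in>L. \<exists>!x. x \<in> L \<and> m a x = b) \<and>
     (\<forall>a\<in>L. \<forall>b\<in>L. \<exists>!y. y \<in> L \<and> m y a = b)"

definition is_C_loop :: "'a set \<Rightarrow> ('a \<Rightarrow> 'a \<Rightarrow> 'a) \<Rightarrow> 'a \<Rightarrow> bool" where
  "is_C_loop L m e \<longleftrightarrow> is_loop L m e \<and>
     (\<forall>x\<in>L. \<forall>y\<in>L. \<forall>z\<in>L. m x (m y (m y z)) = m (m (m x y) y) z)"

definition left_nucleus :: "'a set \<Rightarrow> ('a \<Rightarrow> 'a \<Rightarrow> 'a) \<Rightarrow> 'a set" where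
  "left_nucleus L m = {a \<in> L. \<forall>y\<in>L. \<forall>z\<in>L. m a (m y z) = m (m a y) z}"

definition middle_nucleus :: "'a set \<Rightarrow> ('a \<Rightarrow> 'a \<Rightarrow> 'a) \<Rightarrow> 'a set" where
  "middle_nucleus L m = {a \<in> L. \<forall>y\<in>L. \<forall>z\<in>L. m y (m a z) = m (m y a) z}"

definition right_nucleus :: "'a set \<Rightarrow> ('a \<Rightarrow> 'a \<Rightarrow> 'a) \<Rightarrow> 'a set" where
  "right_nucleus L m = {a \<in> L. \<forall>y\<in>L. \<forall>z\<in>L. m y (m z a) = m (m y z) a}"

definition nucleus :: "'a set \<Rightarrow> ('a \<Rightarrow> 'a \<Rightarrow> 'a) \<Rightarrow> 'a set" where
  "nucleus L m = left_nucleus L m \<inter> middle_nucleus L m \<inter> right_nucleus L m"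

definition is_subloop :: "'a set \<Rightarrow> 'a set \<Rightarrow> ('a \<Rightarrow> 'a \<Rightarrow> 'a) \<Rightarrow> 'a \<Rightarrow> bool" where
  "is_subloop K L m e \<longleftrightarrow> K \<subseteq> L \<and> e \<in> K \<and>
     (\<forall>a\<in>K. \<forall>b\<in>K. m a b \<in> K) \<and>
     (\<forall>a\<in>K. \<forall>b\<in>K. \<forall>x\<in>L. m a x = b \<longrightarrow> x \<in> K) \<and>
     (\<forall>a\<in>K. \<forall>b\<in>K. \<forall>y\<in>L. m y a = b \<longrightarrow> y \<in> K)"

definition is_normal_subloop :: "'a set \<Rightarrow> 'a set \<Rightarrow> ('a \<Rightarrow> 'a \<Rightarrow> 'a) \<Rightarrow> 'a \<Rightarrow> bool" where
  "is_normal_subloop K L m e \<longleftrightarrow> is_subloop K L m e \<and>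
     (\<forall>x\<in>L. (\<lambda>k. m x k) ` K = (\<lambda>k. m k x) ` K) \<and>
     (\<forall>x\<in>L. \<forall>y\<in>L. (\<lambda>k. m x (m y k)) ` K = (\<lambda>k. m (m x y) k) ` K) \<and>
     (\<forall>x\<in>L. \<forall>y\<in>L. (\<lambda>k. m x (m k y)) ` K = (\<lambda>k. m (m x k) y) ` K)"

end

theory Submission
  imports Defs
begin

locale cloop =
  fixes L :: "'a set" and m :: "'a \<Rightarrow> 'a \<Rightarrow> 'a" (infixl "\<cdot>" 70) and e :: 'a
  assumes C: "is_C_loop L m e"
begin

lemma eL: "e \<in> L" using C by (simp add: is_C_loop_def is_loop_def)
lemma cl[simp]: "x \<in> L \<Longrightarrow> y \<in> L \<Longrightarrow> x \<cdot> y \<in> L" using C by (simp add: is_C_loop_def is_loop_def)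
lemma el[simp]: "x \<in> L \<Longrightarrow> e \<cdot> x = x" using C by (simp add: is_C_loop_def is_loop_def)
lemma er[simp]: "x \<in> L \<Longrightarrow> x \<cdot> e = x" using C by (simp add: is_C_loop_def is_loop_def)
lemma lcan: "a \<in> L \<Longrightarrow> x \<in> L \<Longrightarrow> y \<in> L \<Longrightarrow> a \<cdot> x = a \<cdot> y \<Longrightarrow> x = y"
  using C unfolding is_C_loop_def is_loop_def by (metis cl)
lemma rcan: "a \<in> L \<Longrightarrow> x \<in> L \<Longrightarrow> y \<in> L \<Longrightarrow> x \<cdot> a = y \<cdot> a \<Longrightarrow> x = y"
  using C unfolding is_C_loop_def is_loop_def by (metis cl)
lemma ldiv: "a \<in> L \<Longrightarrow> b \<in> L \<Longrightarrow> \<exists>x\<in>L. a \<cdot> x = b"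
  using C unfolding is_C_loop_def is_loop_def by metis
lemma rdiv: "a \<in> L \<Longrightarrow> b \<in> L \<Longrightarrow> \<exists>x\<in>L. x \<cdot> a = b"
  using C unfolding is_C_loop_def is_loop_def by metis
lemma Cid: "x \<in> L \<Longrightarrow> y \<in> L \<Longrightarrow> z \<in> L \<Longrightarrow> x \<cdot> (y \<cdot> (y \<cdot> z)) = ((x \<cdot> y) \<cdot> y) \<cdot> z"
  using C unfolding is_C_loop_def by blast

lemma L1: "y \<in> L \<Longrightarrow> z \<in> L \<Longrightarrow> y \<cdot> (y \<cdot> z) = (y \<cdot> y) \<cdot> z"
  using Cid[of e y z] eL by simp
lemma L2: "x \<in> L \<Longrightarrow> y \<in> L \<Longrightarrow> x \<cdot> (y \<cdot> y) = (x \<cdot> y) \<cdot> y"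
  using Cid[of x y e] eL by simp
lemma sqmid: "y \<in> L \<Longrightarrow> x \<in> L \<Longrightarrow> z \<in> L \<Longrightarrow> x \<cdot> ((y \<cdot> y) \<cdot> z) = (x \<cdot> (y \<cdot> y)) \<cdot> z"
  using Cid[of x y z] L1 L2 by simp

definition i :: "'a \<Rightarrow> 'a" where "i y = (SOME z. z \<in> L \<and> y \<cdot> z = e)"

lemma i_prop: "y \<in> L \<Longrightarrow> i y \<in> L \<and> y \<cdot> i y = e"
  unfolding i_def by (rule someI_ex) (use ldiv[OF _ eL] in blast)

lemma iL[simp]: "y \<in> L \<Longrightarrow> i y \<in> L" using i_prop by blast
lemma ir[simp]: "y \<in> L \<Longrightarrow> y \<cdot> i y = e" using i_prop by blast

lemma RIP[simp]: assumes "u \<in> L" "y \<in> L" shows "(u \<cdot> y) \<cdot> i y = u"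
proof -
  obtain x where x: "x \<in> L" "x \<cdot> y = u" using rdiv assms by blast
  have "x \<cdot> (y \<cdot> (y \<cdot> i y)) = ((x \<cdot> y) \<cdot> y) \<cdot> i y" using Cid[OF x(1) assms(2) iL[OF assms(2)]] .
  then have "x \<cdot> y = ((x \<cdot> y) \<cdot> y) \<cdot> i y" using x assms by simp
  then show ?thesis using x by simp
qed

lemma il[simp]: assumes "y \<in> L" shows "i y \<cdot> y = e"
proof -
  obtain l where l: "l \<in> L" "l \<cdot> y = e" using rdiv[OF assms eL] by blast
  have "(l \<cdot> y) \<cdot> i y = l" using l(1) assms by (rule RIP)
  then have "e \<cdot> i y = l" using l by simp
  then have "l = i y" using assms by simp
  then show ?thesis using l by simp
qed

lemma LIP[simp]: assumes "v \<in> L" "y \<in> L" shows "i y \<cdot> (y \<cdot> v) = v"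
proof -
  obtain z where z: "z \<in> L" "y \<cdot> z = v" using ldiv assms by blast
  have "i y \<cdot> (y \<cdot> (y \<cdot> z)) = ((i y \<cdot> y) \<cdot> y) \<cdot> z" using Cid[OF iL[OF assms(2)] assms(2) z(1)] .
  then have "i y \<cdot> (y \<cdot> (y \<cdot> z)) = y \<cdot> z" using z assms by simp
  then show ?thesis using z by simp
qed

lemma ii[simp]: assumes "y \<in> L" shows "i (i y) = y"
  using lcan[of "i y" "i (i y)" y] assms by simp

lemma AAIP: assumes "x \<in> L" "y \<in> L" shows "i (x \<cdot> y) = i y \<cdot> i x"
proof -
  have "i (x \<cdot> y) \<cdot> ((x \<cdot> y) \<cdot> i y) = i y" using LIP[of "i y" "x \<cdot> y"] assms by simp
  moreover have "(x \<cdot> y) \<cdot> i y = x" using RIP[OF assms] .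
  ultimately have "i (x \<cdot> y) \<cdot> x = i y" by metis
  then have "(i (x \<cdot> y) \<cdot> x) \<cdot> i x = i y \<cdot> i x" by simp
  then show ?thesis using assms by simp
qed

definition Nm where "Nm a \<longleftrightarrow> a \<in> L \<and> (\<forall>y\<in>L. \<forall>z\<in>L. y \<cdot> (a \<cdot> z) = (y \<cdot> a) \<cdot> z)"

lemma Nm_inv: assumes "Nm a" shows "Nm (i a)"
proof -
  have aL: "a \<in> L" using assms Nm_def by blast
  have "u \<cdot> (i a \<cdot> v) = (u \<cdot> i a) \<cdot> v" if "u \<in> L" "v \<in> L" for u v
  proof -
    have "(u \<cdot> i a) \<cdot> (a \<cdot> (i a \<cdot> v)) = ((u \<cdot> i a) \<cdot> a) \<cdot> (i a \<cdot> v)"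
      using assms that aL unfolding Nm_def by simp
    moreover have "a \<cdot> (i a \<cdot> v) = v" using LIP[of v "i a"] that aL by simp
    moreover have "(u \<cdot> i a) \<cdot> a = u" using RIP[of u "i a"] that aL by simp
    ultimately show ?thesis by simp
  qed
  then show ?thesis using aL Nm_def by simp
qed

lemma Nm_lam0: assumes "Nm a" "u \<in> L" "w \<in> L" shows "i a \<cdot> (u \<cdot> w) = (i a \<cdot> u) \<cdot> w"
proof -
  have aL: "a \<in> L" using assms Nm_def by blast
  define y where "y = i u"
  have yL: "y \<in> L" and uy: "u = i y" using y_def assms by auto
  define v where "v = i a \<cdot> (i y \<cdot> w)"
  have vL: "v \<in> L" using v_def aL yL assms by simp
  have "(y \<cdot> a) \<cdot> v = y \<cdot> (a \<cdot> v)" using assms(1) yL vL unfolding Nm_def by simp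
  also have "a \<cdot> v = i y \<cdot> w" using v_def LIP[of "i y \<cdot> w" "i a"] aL yL assms by simp
  also have "y \<cdot> (i y \<cdot> w) = w" using LIP[of w "i y"] yL assms by simp
  finally have "i (y \<cdot> a) \<cdot> w = v" using LIP[of v "y \<cdot> a"] vL yL aL by simp
  then show ?thesis using AAIP[OF yL aL] v_def uy by simp
qed

lemma Nm_rho0: assumes "Nm a" "w \<in> L" "u \<in> L" shows "w \<cdot> (u \<cdot> i a) = (w \<cdot> u) \<cdot> i a"
proof -
  have aL: "a \<in> L" using assms Nm_def by blast
  define z where "z = i u"
  have zL: "z \<in> L" and uz: "u = i z" using z_def assms by auto
  define v where "v = (w \<cdot> i z) \<cdot> i a"
  have vL: "v \<in> L" using v_def aL zL assms by simp
  have "v \<cdot> (a \<cdot> z) = (v \<cdot> a) \<cdot> z" using assms(1) zL vL unfolding Nm_def by simp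
  also have "v \<cdot> a = w \<cdot> i z" using v_def RIP[of "w \<cdot> i z" "i a"] aL zL assms by simp
  also have "(w \<cdot> i z) \<cdot> z = w" using RIP[of w "i z"] zL assms by simp
  finally have "w \<cdot> i (a \<cdot> z) = v" using RIP[of v "a \<cdot> z"] vL zL aL by simp
  then show ?thesis using AAIP[OF aL zL] v_def uz by simp
qed

lemma Nm_lam: assumes "Nm a" "u \<in> L" "v \<in> L" shows "a \<cdot> (u \<cdot> v) = (a \<cdot> u) \<cdot> v"
  using Nm_lam0[OF Nm_inv[OF assms(1)] assms(2,3)] assms(1) Nm_def by simp

lemma Nm_rho: assumes "Nm a" "y \<in> L" "z \<in> L" shows "y \<cdot> (z \<cdot> a) = (y \<cdot> z) \<cdot> a"
  using Nm_rho0[OF Nm_inv[OF assms(1)] assms(2,3)] assms(1) Nm_def by simp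

lemma N_iff: "a \<in> nucleus L m \<longleftrightarrow> Nm a"
  unfolding nucleus_def left_nucleus_def middle_nucleus_def right_nucleus_def
  using Nm_lam Nm_rho by (auto simp: Nm_def)

lemma NL: "a \<in> nucleus L m \<Longrightarrow> a \<in> L" using N_iff Nm_def by blast
lemma Nl: "a \<in> nucleus L m \<Longrightarrow> u \<in> L \<Longrightarrow> v \<in> L \<Longrightarrow> a \<cdot> (u \<cdot> v) = (a \<cdot> u) \<cdot> v"
  using N_iff Nm_lam by blast
lemma Nmid: "a \<in> nucleus L m \<Longrightarrow> u \<in> L \<Longrightarrow> v \<in> L \<Longrightarrow> u \<cdot> (a \<cdot> v) = (u \<cdot> a) \<cdot> v"
  using N_iff Nm_def by blast
lemma Nr: "a \<in> nucleus L m \<Longrightarrow> u \<in> L \<Longrightarrow> v \<in> L \<Longrightarrow> u \<cdot> (v \<cdot> a) = (u \<cdot> v) \<cdot> a"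
  using N_iff Nm_rho by blast

lemma N_inv: "a \<in> nucleus L m \<Longrightarrow> i a \<in> nucleus L m" using N_iff Nm_inv by blast
lemma N_e: "e \<in> nucleus L m" unfolding N_iff Nm_def using eL by simp
lemma N_mul: assumes "a \<in> nucleus L m" "b \<in> nucleus L m" shows "a \<cdot> b \<in> nucleus L m"
proof -
  have L: "a \<in> L" "b \<in> L" using assms NL by auto
  have "y \<cdot> ((a \<cdot> b) \<cdot> z) = (y \<cdot> (a \<cdot> b)) \<cdot> z" if "y \<in> L" "z \<in> L" for y z
  proof -
    have "y \<cdot> ((a \<cdot> b) \<cdot> z) = y \<cdot> (a \<cdot> (b \<cdot> z))" using Nl[OF assms(1)] L that by simp
    also have "\<dots> = (y \<cdot> a) \<cdot> (b \<cdot> z)" using Nmid[OF assms(1)] L that by simp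
    also have "\<dots> = ((y \<cdot> a) \<cdot> b) \<cdot> z" using Nmid[OF assms(2)] L that by simp
    also have "\<dots> = (y \<cdot> (a \<cdot> b)) \<cdot> z" using Nr[OF assms(2)] L that by simp
    finally show ?thesis .
  qed
  then show ?thesis unfolding N_iff Nm_def using L by simp
qed

lemma sqN: "y \<in> L \<Longrightarrow> y \<cdot> y \<in> nucleus L m"
  unfolding N_iff Nm_def using sqmid by simp

lemma inv_sq: assumes "w \<in> L" shows "i w = i (w \<cdot> w) \<cdot> w"
proof -
  have "i (w \<cdot> w) \<cdot> ((w \<cdot> w) \<cdot> i w) = i w" using LIP[of "i w" "w \<cdot> w"] assms by simp
  moreover have "(w \<cdot> w) \<cdot> i w = w" using RIP assms by simp
  ultimately show ?thesis by metis
qed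

lemma inv_sq2: assumes "w \<in> L" shows "i w = w \<cdot> i (w \<cdot> w)"
proof -
  have "(i w \<cdot> (w \<cdot> w)) \<cdot> i (w \<cdot> w) = i w" using RIP[of "i w" "w \<cdot> w"] assms by simp
  moreover have "i w \<cdot> (w \<cdot> w) = w" using LIP assms by simp
  ultimately show ?thesis by metis
qed

lemma normL: assumes x: "x \<in> L" and k: "k \<in> nucleus L m"
  shows "\<exists>k'\<in>nucleus L m. x \<cdot> k = k' \<cdot> x"
proof -
  have kL: "k \<in> L" using k NL by blast
  define p where "p = x \<cdot> x"
  have pN: "p \<in> nucleus L m" using sqN x p_def by simp
  have xp: "x = p \<cdot> i x" using p_def x by simp
  define w where "w = i k \<cdot> x"
  have wL: "w \<in> L" using w_def x kL by simp
  define q where "q = i (w \<cdot> w)"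
  have qN: "q \<in> nucleus L m" using q_def N_inv sqN wL by simp
  have ikN: "i k \<in> nucleus L m" using N_inv k by simp
  have ixk: "i x \<cdot> k = i w" using AAIP[of "i k" x] w_def kL x by simp
  have "x \<cdot> k = (p \<cdot> i x) \<cdot> k" using xp by simp
  also have "\<dots> = p \<cdot> (i x \<cdot> k)" using Nl[OF pN] x kL by simp
  also have "\<dots> = p \<cdot> (q \<cdot> (i k \<cdot> x))" using ixk inv_sq[OF wL] q_def w_def by simp
  also have "\<dots> = p \<cdot> ((q \<cdot> i k) \<cdot> x)" using Nl[OF qN] x kL by simp
  also have "\<dots> = (p \<cdot> (q \<cdot> i k)) \<cdot> x" using Nl[OF pN] x kL qN NL by simp
  finally show ?thesis using N_mul pN qN ikN by blast
qed

lemma normR: assumes x: "x \<in> L" and k: "k \<in> nucleus L m"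
  shows "\<exists>k'\<in>nucleus L m. k \<cdot> x = x \<cdot> k'"
proof -
  have kL: "k \<in> L" using k NL by blast
  define p where "p = x \<cdot> x"
  have pN: "p \<in> nucleus L m" using sqN x p_def by simp
  have xp: "x = i x \<cdot> p" using p_def x by simp
  define w where "w = x \<cdot> i k"
  have wL: "w \<in> L" using w_def x kL by simp
  define q where "q = i (w \<cdot> w)"
  have qN: "q \<in> nucleus L m" using q_def N_inv sqN wL by simp
  have ikN: "i k \<in> nucleus L m" using N_inv k by simp
  have ixk: "k \<cdot> i x = i w" using AAIP[of x "i k"] w_def kL x by simp
  have "k \<cdot> x = k \<cdot> (i x \<cdot> p)" using xp by simp
  also have "\<dots> = (k \<cdot> i x) \<cdot> p" using Nr[OF pN] x kL by simp
  also have "\<dots> = ((x \<cdot> i k) \<cdot> q) \<cdot> p" using ixk inv_sq2[OF wL] q_def w_def by simp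
  also have "\<dots> = (x \<cdot> (i k \<cdot> q)) \<cdot> p" using Nr[OF qN] x kL by simp
  also have "\<dots> = x \<cdot> ((i k \<cdot> q) \<cdot> p)" using Nr[OF pN] x kL qN NL by simp
  finally show ?thesis using N_mul pN qN ikN by blast
qed

lemma main: "is_normal_subloop (nucleus L m) L m e \<and>
         (\<forall>a\<in>nucleus L m. \<forall>b\<in>nucleus L m. \<forall>c\<in>nucleus L m. m a (m b c) = m (m a b) c)"
proof -
  let ?N = "nucleus L m"
  have sub: "is_subloop ?N L m e"
    unfolding is_subloop_def
  proof (intro conjI ballI impI)
    show "?N \<subseteq> L" using NL by blast
    show "e \<in> ?N" by (rule N_e)
    show "a \<cdot> b \<in> ?N" if "a \<in> ?N" "b \<in> ?N" for a b using N_mul that by blast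
    show "x \<in> ?N" if "a \<in> ?N" "b \<in> ?N" "x \<in> L" "a \<cdot> x = b" for a b x
    proof -
      have "x = i a \<cdot> b" using that LIP[of x a] NL by metis
      then show ?thesis using N_mul N_inv that by simp
    qed
    show "y \<in> ?N" if "a \<in> ?N" "b \<in> ?N" "y \<in> L" "y \<cdot> a = b" for a b y
    proof -
      have "y = b \<cdot> i a" using that RIP[of y a] NL by metis
      then show ?thesis using N_mul N_inv that by simp
    qed
  qed
  have n1: "(\<lambda>k. x \<cdot> k) ` ?N = (\<lambda>k. k \<cdot> x) ` ?N" if x: "x \<in> L" for x
  proof
    show "(\<lambda>k. x \<cdot> k) ` ?N \<subseteq> (\<lambda>k. k \<cdot> x) ` ?N" using normL[OF x] by blast
    show "(\<lambda>k. k \<cdot> x) ` ?N \<subseteq> (\<lambda>k. x \<cdot> k) ` ?N" using normR[OF x] by blast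
  qed
  have n2: "(\<lambda>k. x \<cdot> (y \<cdot> k)) ` ?N = (\<lambda>k. (x \<cdot> y) \<cdot> k) ` ?N" if x: "x \<in> L" and y: "y \<in> L" for x y
  proof
    show "(\<lambda>k. x \<cdot> (y \<cdot> k)) ` ?N \<subseteq> (\<lambda>k. (x \<cdot> y) \<cdot> k) ` ?N"
    proof
      fix u assume "u \<in> (\<lambda>k. x \<cdot> (y \<cdot> k)) ` ?N"
      then obtain k where k: "k \<in> ?N" and u: "u = x \<cdot> (y \<cdot> k)" by blast
      obtain k3 where k3: "k3 \<in> ?N" "y \<cdot> k = k3 \<cdot> y" using normL[OF y k] by blast
      obtain k4 where k4: "k4 \<in> ?N" "x \<cdot> k3 = k4 \<cdot> x" using normL[OF x k3(1)] by blast
      obtain k5 where k5: "k5 \<in> ?N" "k4 \<cdot> (x \<cdot> y) = (x \<cdot> y) \<cdot> k5" using normR[OF _ k4(1), of "x \<cdot> y"] x y by auto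
      have "u = (x \<cdot> k3) \<cdot> y" using u k3 Nmid[OF k3(1) x y] by simp
      also have "\<dots> = k4 \<cdot> (x \<cdot> y)" using k4 Nl[OF k4(1) x y] by simp
      finally show "u \<in> (\<lambda>k. (x \<cdot> y) \<cdot> k) ` ?N" using k5 by blast
    qed
    show "(\<lambda>k. (x \<cdot> y) \<cdot> k) ` ?N \<subseteq> (\<lambda>k. x \<cdot> (y \<cdot> k)) ` ?N"
    proof
      fix u assume "u \<in> (\<lambda>k. (x \<cdot> y) \<cdot> k) ` ?N"
      then obtain k where k: "k \<in> ?N" and u: "u = (x \<cdot> y) \<cdot> k" by blast
      obtain k1 where k1: "k1 \<in> ?N" "(x \<cdot> y) \<cdot> k = k1 \<cdot> (x \<cdot> y)" using normL[OF _ k, of "x \<cdot> y"] x y by auto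
      obtain k2 where k2: "k2 \<in> ?N" "k1 \<cdot> x = x \<cdot> k2" using normR[OF x k1(1)] by blast
      obtain k3 where k3: "k3 \<in> ?N" "k2 \<cdot> y = y \<cdot> k3" using normR[OF y k2(1)] by blast
      have "u = (k1 \<cdot> x) \<cdot> y" using u k1 Nl[OF k1(1) x y] by simp
      also have "\<dots> = x \<cdot> (k2 \<cdot> y)" using k2 Nmid[OF k2(1) x y] by simp
      also have "\<dots> = x \<cdot> (y \<cdot> k3)" using k3 by simp
      finally show "u \<in> (\<lambda>k. x \<cdot> (y \<cdot> k)) ` ?N" using k3 by blast
    qed
  qed
  have n3: "(\<lambda>k. x \<cdot> (k \<cdot> y)) ` ?N = (\<lambda>k. (x \<cdot> k) \<cdot> y) ` ?N" if x: "x \<in> L" and y: "y \<in> L" for x y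
    using Nmid x y by (intro image_cong) auto
  have assoc: "\<forall>a\<in>?N. \<forall>b\<in>?N. \<forall>c\<in>?N. a \<cdot> (b \<cdot> c) = (a \<cdot> b) \<cdot> c"
    using Nl NL by blast
  show ?thesis unfolding is_normal_subloop_def using sub n1 n2 n3 assoc by blast
qed

end

theorem proposition2p5:
  fixes L :: "'a set" and m :: "'a \<Rightarrow> 'a \<Rightarrow> 'a" and e :: 'a
  assumes "is_C_loop L m e"
  shows "is_normal_subloop (nucleus L m) L m e \<and>
         (\<forall>a\<in>nucleus L m. \<forall>b\<in>nucleus L m. \<forall>c\<in>nucleus L m. m a (m b c) = m (m a b) c)"
proof -
  interpret cloop L m e using assms by unfold_locales
  show ?thesis by (rule main)
qed

end
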